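(* Let $n\ge2$, $l\in\{1,\dots,n-1\}$, $p$ a strictly positive distribution on $\{0,1\}^n$, and let the Fisher information matrix of the $l$-mixed coordinates at $p$ be $G_\zeta=\begin{pmatrix}A&0\\0&B\end{pmatrix}$ with $A=((G_\eta^{-1})_{I_\eta})^{-1}$ and $B=((G_\theta^{-1})_{J_\theta})^{-1}$. Then the diagonal elements of $A$ are lower bounded by one, and the diagonal elements of $B$ are upper bounded by one.
   Context: $X_I(x)=\prod_{i\in I}x_i$; $\eta_I=E_p[X_I]$; $\theta^I$ defined by $\log p(x)=\sum_{I\ne\emptyset}\theta^IX_I(x)-\psi(\theta)$. $I_\eta=\{I:1\le|I|\le l\}$, $J_\theta=\{I:|I|>l\}$; the $l$-mixed coordinates are $((\eta_I)_{I\in I_\eta},(\theta^I)_{I\in J_\theta})$. $G_\eta,G_\theta$ are the Fisher information matrices of the $\eta$- and $\theta$-coordinates at $p$ (so $G_\theta$ has entries $\eta_{I\cup J}-\eta_I\eta_J$), and $M_{\mathcal I}$ denotes the principal submatrix of $M$ indexed by $\mathcal I$. *)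

theory Defs
  imports Complex_Main "HOL-Library.FuncSet"
begin

definition cube :: "nat \<Rightarrow> (nat \<Rightarrow> real) set" where
  "cube n = PiE {1..n} (\<lambda>_. {0, 1})"

definition XI :: "nat set \<Rightarrow> (nat \<Rightarrow> real) \<Rightarrow> real" where
  "XI I x = (\<Prod>i\<in>I. x i)"

definition eta :: "nat \<Rightarrow> ((nat \<Rightarrow> real) \<Rightarrow> real) \<Rightarrow> nat set \<Rightarrow> real" where
  "eta n p I = (\<Sum>x\<in>cube n. p x * XI I x)"

definition idx :: "nat \<Rightarrow> nat set set" where
  "idx n = {I. I \<subseteq> {1..n} \<and> I \<noteq> {}}"

definition I_eta :: "nat \<Rightarrow> nat \<Rightarrow> nat set set" where
  "I_eta n l = {I \<in> idx n. 1 \<le> card I \<and> card I \<le> l}"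

definition J_theta :: "nat \<Rightarrow> nat \<Rightarrow> nat set set" where
  "J_theta n l = {I \<in> idx n. card I > l}"

definition mat_inv_on :: "'i set \<Rightarrow> ('i \<Rightarrow> 'i \<Rightarrow> real) \<Rightarrow> ('i \<Rightarrow> 'i \<Rightarrow> real)" where
  "mat_inv_on S M = (SOME N.
      (\<forall>i\<in>S. \<forall>j\<in>S. (\<Sum>k\<in>S. M i k * N k j) = (if i = j then 1 else 0)) \<and>
      (\<forall>i\<in>S. \<forall>j\<in>S. (\<Sum>k\<in>S. N i k * M k j) = (if i = j then 1 else 0)))"

text \<open>Fisher information matrix in theta-coordinates: eta_{I u J} - eta_I eta_J.\<close>
definition G_theta :: "nat \<Rightarrow> ((nat \<Rightarrow> real) \<Rightarrow> real) \<Rightarrow> nat set \<Rightarrow> nat set \<Rightarrow> real" where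
  "G_theta n p I J = eta n p (I \<union> J) - eta n p I * eta n p J"

definition G_eta :: "nat \<Rightarrow> ((nat \<Rightarrow> real) \<Rightarrow> real) \<Rightarrow> nat set \<Rightarrow> nat set \<Rightarrow> real" where
  "G_eta n p = mat_inv_on (idx n) (G_theta n p)"

definition blockA :: "nat \<Rightarrow> nat \<Rightarrow> ((nat \<Rightarrow> real) \<Rightarrow> real) \<Rightarrow> nat set \<Rightarrow> nat set \<Rightarrow> real" where
  "blockA n l p = mat_inv_on (I_eta n l) (mat_inv_on (idx n) (G_eta n p))"

definition blockB :: "nat \<Rightarrow> nat \<Rightarrow> ((nat \<Rightarrow> real) \<Rightarrow> real) \<Rightarrow> nat set \<Rightarrow> nat set \<Rightarrow> real" where
  "blockB n l p = mat_inv_on (J_theta n l) (mat_inv_on (idx n) (G_theta n p))"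

end

theory Submission
  imports Defs "Jordan_Normal_Form.Determinant"
begin


definition is_inv :: "'i set \<Rightarrow> ('i \<Rightarrow> 'i \<Rightarrow> real) \<Rightarrow> ('i \<Rightarrow> 'i \<Rightarrow> real) \<Rightarrow> bool" where
  "is_inv S M N \<longleftrightarrow>
      (\<forall>i\<in>S. \<forall>j\<in>S. (\<Sum>k\<in>S. M i k * N k j) = (if i = j then 1 else 0)) \<and>
      (\<forall>i\<in>S. \<forall>j\<in>S. (\<Sum>k\<in>S. N i k * M k j) = (if i = j then 1 else 0))"

lemma ex_inv:
  fixes M :: "'i \<Rightarrow> 'i \<Rightarrow> real"
  assumes fin: "finite S"
    and inj: "\<And>x. (\<forall>i\<in>S. (\<Sum>j\<in>S. M i j * x j) = 0) \<Longrightarrow> \<forall>i\<in>S. x i = 0"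
  shows "\<exists>N. is_inv S M N"
proof -
  define m where "m = card S"
  obtain g where g: "bij_betw g {0..<m} S" using ex_bij_betw_nat_finite[OF fin] m_def by blast
  define h where "h = the_inv_into {0..<m} g"
  have hg: "\<And>a. a < m \<Longrightarrow> h (g a) = a" using g unfolding h_def
    by (simp add: bij_betw_def the_inv_into_f_f)
  have gh: "\<And>i. i \<in> S \<Longrightarrow> g (h i) = i" using g unfolding h_def
    by (simp add: bij_betw_def f_the_inv_into_f)
  have hS: "\<And>i. i \<in> S \<Longrightarrow> h i < m" using g unfolding h_def
    by (metis atLeastLessThan_iff bij_betw_def the_inv_into_into order_refl)
  have gS: "\<And>a. a < m \<Longrightarrow> g a \<in> S" using g by (auto simp: bij_betw_def)
  have reidx: "\<And>f. (\<Sum>j\<in>S. f j) = (\<Sum>b\<in>{0..<m}. f (g b))"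
    using g by (simp add: sum.reindex_bij_betw)
  define A where "A = mat m m (\<lambda>(a,b). M (g a) (g b))"
  have A: "A \<in> carrier_mat m m" unfolding A_def by simp
  have "det A \<noteq> 0"
  proof
    assume "det A = 0"
    then obtain v where v: "v \<in> carrier_vec m" "v \<noteq> 0\<^sub>v m" "A *\<^sub>v v = 0\<^sub>v m"
      using det_0_iff_vec_prod_zero[OF A] by blast
    define x where "x = (\<lambda>i. v $ (h i))"
    have "\<forall>i\<in>S. (\<Sum>j\<in>S. M i j * x j) = 0"
    proof
      fix i assume i: "i \<in> S"
      have "(\<Sum>j\<in>S. M i j * x j) = (\<Sum>b\<in>{0..<m}. M i (g b) * v $ b)"
        by (simp add: reidx x_def hg)
      also have "\<dots> = (A *\<^sub>v v) $ (h i)"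
        using v(1) hS[OF i] gh[OF i] by (simp add: A_def scalar_prod_def)
      also have "\<dots> = 0" using v(3) hS[OF i] by simp
      finally show "(\<Sum>j\<in>S. M i j * x j) = 0" .
    qed
    then have "\<forall>i\<in>S. x i = 0" by (rule inj)
    then have "\<forall>a<m. v $ a = 0" using gS hg unfolding x_def by metis
    then have "v = 0\<^sub>v m" using v(1) by (intro eq_vecI) auto
    with v(2) show False by simp
  qed
  from det_non_zero_imp_unit[OF A this, unfolded Units_def, of "()"]
  obtain B where B: "B \<in> carrier_mat m m" and BA: "B * A = 1\<^sub>m m" and AB: "A * B = 1\<^sub>m m"
    by (auto simp: ring_mat_def)
  define N where "N = (\<lambda>i j. B $$ (h i, h j))"
  have hinj: "\<And>i j. i \<in> S \<Longrightarrow> j \<in> S \<Longrightarrow> h i = h j \<longleftrightarrow> i = j" using gh by metis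
  have "is_inv S M N" unfolding is_inv_def
  proof (intro conjI ballI)
    fix i j assume i: "i \<in> S" and j: "j \<in> S"
    have "(\<Sum>k\<in>S. M i k * N k j) = (\<Sum>c\<in>{0..<m}. M i (g c) * B $$ (c, h j))"
      by (simp add: reidx N_def hg)
    also have "\<dots> = (A * B) $$ (h i, h j)"
      using B hS[OF i] hS[OF j] gh[OF i] by (simp add: A_def scalar_prod_def)
    also have "\<dots> = (if i = j then 1 else 0)"
      using AB hS[OF i] hS[OF j] hinj[OF i j] by simp
    finally show "(\<Sum>k\<in>S. M i k * N k j) = (if i = j then 1 else 0)" .
    have "(\<Sum>k\<in>S. N i k * M k j) = (\<Sum>c\<in>{0..<m}. B $$ (h i, c) * M (g c) j)"
      by (simp add: reidx N_def hg)
    also have "\<dots> = (B * A) $$ (h i, h j)"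
      using B hS[OF i] hS[OF j] gh[OF j] by (simp add: A_def scalar_prod_def)
    also have "\<dots> = (if i = j then 1 else 0)"
      using BA hS[OF i] hS[OF j] hinj[OF i j] by simp
    finally show "(\<Sum>k\<in>S. N i k * M k j) = (if i = j then 1 else 0)" .
  qed
  then show ?thesis by blast
qed



definition bil :: "'i set \<Rightarrow> ('i \<Rightarrow> 'i \<Rightarrow> real) \<Rightarrow> ('i \<Rightarrow> real) \<Rightarrow> ('i \<Rightarrow> real) \<Rightarrow> real" where
  "bil S M x y = (\<Sum>k\<in>S. \<Sum>l\<in>S. x k * M k l * y l)"

definition pd :: "'i set \<Rightarrow> ('i \<Rightarrow> 'i \<Rightarrow> real) \<Rightarrow> bool" where
  "pd S M \<longleftrightarrow> (\<forall>x. (\<exists>i\<in>S. x i \<noteq> 0) \<longrightarrow> bil S M x x > 0)"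

definition symm :: "'i set \<Rightarrow> ('i \<Rightarrow> 'i \<Rightarrow> real) \<Rightarrow> bool" where
  "symm S M \<longleftrightarrow> (\<forall>i\<in>S. \<forall>j\<in>S. M i j = M j i)"

lemma pd_psd: "bil S M x x \<ge> 0" if "pd S M"
proof (cases "\<exists>i\<in>S. x i \<noteq> 0")
  case True
  then show ?thesis using that unfolding pd_def by force
next
  case False
  then show ?thesis unfolding bil_def by simp
qed

lemma bil_diff: "bil S M (\<lambda>k. x k - y k) (\<lambda>k. x k - y k) = bil S M x x - bil S M x y - bil S M y x + bil S M y y"
  unfolding bil_def by (simp add: algebra_simps sum_subtractf sum.distrib)

lemma bil_alt: "bil S M x y = (\<Sum>k\<in>S. x k * (\<Sum>l\<in>S. M k l * y l))"
  unfolding bil_def by (simp add: sum_distrib_left mult.assoc)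

lemma bil_alt2: "bil S M x y = (\<Sum>l\<in>S. (\<Sum>k\<in>S. x k * M k l) * y l)"
  unfolding bil_def by (subst sum.swap) (simp add: sum_distrib_right)

lemma pd_inj:
  assumes "pd S M" "\<forall>i\<in>S. (\<Sum>j\<in>S. M i j * x j) = 0"
  shows "\<forall>i\<in>S. x i = 0"
proof (rule ccontr)
  assume "\<not> ?thesis"
  then have "bil S M x x > 0" using assms(1) unfolding pd_def by blast
  moreover have "bil S M x x = 0" unfolding bil_alt using assms(2) by simp
  ultimately show False by simp
qed

lemma pd_ex_inv: "finite S \<Longrightarrow> pd S M \<Longrightarrow> \<exists>N. is_inv S M N"
  using ex_inv pd_inj by metis

lemma pd_sub:
  assumes "finite S" "pd S M" "T \<subseteq> S" shows "pd T M"
  unfolding pd_def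
proof (intro allI impI)
  fix x :: "_ \<Rightarrow> real" assume x: "\<exists>i\<in>T. x i \<noteq> 0"
  define x' where "x' = (\<lambda>i. if i \<in> T then x i else (0::real))"
  have "\<exists>i\<in>S. x' i \<noteq> 0" using x assms(3) unfolding x'_def by auto
  then have "bil S M x' x' > 0" using assms(2) unfolding pd_def by blast
  moreover have "bil S M x' x' = bil T M x x"
  proof -
    have "bil S M x' x' = (\<Sum>k\<in>T. \<Sum>l\<in>S. x' k * M k l * x' l)"
      unfolding bil_def using assms(1,3)
      by (intro sum.mono_neutral_right) (auto simp: x'_def)
    also have "\<dots> = (\<Sum>k\<in>T. \<Sum>l\<in>T. x' k * M k l * x' l)"
      using assms(1,3) by (intro sum.cong refl sum.mono_neutral_right) (auto simp: x'_def)
    also have "\<dots> = bil T M x x" unfolding bil_def x'_def by simp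
    finally show ?thesis .
  qed
  ultimately show "bil T M x x > 0" by simp
qed

lemma inv_unique:
  assumes "finite S" "is_inv S M N1" "is_inv S M N2" "i \<in> S" "j \<in> S"
  shows "N1 i j = N2 i j"
proof -
  have "N1 i j = (\<Sum>k\<in>S. N1 i k * (if k = j then 1 else 0))"
    using assms by (simp add: if_distrib sum.delta cong: if_cong)
  also have "\<dots> = (\<Sum>k\<in>S. N1 i k * (\<Sum>l\<in>S. M k l * N2 l j))"
    using assms(3,5) unfolding is_inv_def by simp
  also have "\<dots> = (\<Sum>l\<in>S. (\<Sum>k\<in>S. N1 i k * M k l) * N2 l j)"
    by (simp add: sum_distrib_left sum_distrib_right mult.assoc) (rule sum.swap)
  also have "\<dots> = (\<Sum>l\<in>S. (if i = l then 1 else 0) * N2 l j)"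
    using assms(2,4) unfolding is_inv_def by simp
  also have "\<dots> = (\<Sum>l\<in>S. if i = l then N2 l j else 0)" by (intro sum.cong) auto
  also have "\<dots> = N2 i j" using assms by simp
  finally show ?thesis .
qed

lemma inv_sym:
  assumes "finite S" "symm S M" "is_inv S M N"
  shows "symm S N"
proof -
  have "is_inv S M (\<lambda>i j. N j i)" unfolding is_inv_def
  proof (intro conjI ballI)
    fix i j assume i: "i \<in> S" and j: "j \<in> S"
    have "(\<Sum>k\<in>S. M i k * N j k) = (\<Sum>k\<in>S. N j k * M k i)"
      using assms(2) i by (intro sum.cong) (auto simp: symm_def mult.commute)
    then show "(\<Sum>k\<in>S. M i k * N j k) = (if i = j then 1 else 0)"
      using assms(3) i j unfolding is_inv_def by auto
    have "(\<Sum>k\<in>S. N k i * M k j) = (\<Sum>k\<in>S. M j k * N k i)"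
      using assms(2) j by (intro sum.cong) (auto simp: symm_def mult.commute)
    then show "(\<Sum>k\<in>S. N k i * M k j) = (if i = j then 1 else 0)"
      using assms(3) i j unfolding is_inv_def by auto
  qed
  then show ?thesis using inv_unique[OF assms(1) assms(3)] unfolding symm_def by metis
qed



lemma delta1: "finite S \<Longrightarrow> (\<Sum>k\<in>S. f k * (if k = a then 1 else (0::real))) = (if a \<in> S then f a else 0)"
proof -
  have "(\<Sum>k\<in>S. f k * (if k = a then 1 else (0::real))) = (\<Sum>k\<in>S. if k = a then f k else 0)"
    by (intro sum.cong) auto
  then show "finite S \<Longrightarrow> ?thesis" by simp
qed

lemma delta2: "finite S \<Longrightarrow> (\<Sum>k\<in>S. (if k = a then 1 else (0::real)) * f k) = (if a \<in> S then f a else 0)"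
  using delta1[of S f a] by (simp add: mult.commute)

lemma ext_sum_r:
  fixes f g :: "_ \<Rightarrow> real"
  assumes "finite S" "T \<subseteq> S"
  shows "(\<Sum>l\<in>S. f l * (if l \<in> T then g l else 0)) = (\<Sum>l\<in>T. f l * g l)"
proof -
  have "(\<Sum>l\<in>S. f l * (if l \<in> T then g l else 0)) = (\<Sum>l\<in>T. f l * (if l \<in> T then g l else 0))"
    using assms by (intro sum.mono_neutral_right) auto
  also have "\<dots> = (\<Sum>l\<in>T. f l * g l)" by (intro sum.cong) auto
  finally show ?thesis .
qed

lemma ext_sum_l:
  fixes f g :: "_ \<Rightarrow> real"
  assumes "finite S" "T \<subseteq> S"
  shows "(\<Sum>l\<in>S. (if l \<in> T then g l else 0) * f l) = (\<Sum>l\<in>T. g l * f l)"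
  using ext_sum_r[OF assms, of f g] by (simp add: mult.commute)

lemma pd_inv:
  assumes fin: "finite S" and pd: "pd S M" and inv: "is_inv S M N"
  shows "pd S N"
  unfolding pd_def
proof (intro allI impI)
  fix x :: "_ \<Rightarrow> real" assume x: "\<exists>i\<in>S. x i \<noteq> 0"
  define y where "y = (\<lambda>k. \<Sum>i\<in>S. N k i * x i)"
  have a: "(\<Sum>l\<in>S. M k l * y l) = x k" if k: "k \<in> S" for k
  proof -
    have "(\<Sum>l\<in>S. M k l * y l) = (\<Sum>i\<in>S. (\<Sum>l\<in>S. M k l * N l i) * x i)"
      unfolding y_def by (simp add: sum_distrib_left sum_distrib_right mult.assoc) (rule sum.swap)
    also have "\<dots> = (\<Sum>i\<in>S. (if k = i then x i else 0))"
      using inv k unfolding is_inv_def by (intro sum.cong) auto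
    also have "\<dots> = x k" using fin k by simp
    finally show ?thesis .
  qed
  have "\<exists>i\<in>S. y i \<noteq> 0"
  proof (rule ccontr)
    assume "\<not> ?thesis"
    then have "\<forall>k\<in>S. x k = 0" using a by (metis (no_types, lifting) mult_zero_right sum.neutral)
    with x show False by blast
  qed
  then have "bil S M y y > 0" using pd unfolding pd_def by blast
  moreover have "bil S M y y = bil S N x x"
  proof -
    have "bil S M y y = (\<Sum>k\<in>S. y k * x k)" unfolding bil_alt using a by (intro sum.cong) auto
    also have "\<dots> = bil S N x x" unfolding bil_def y_def
      by (simp add: sum_distrib_right sum_distrib_left mult.commute mult.left_commute)
    finally show ?thesis .
  qed
  ultimately show "bil S N x x > 0" by simp
qed

lemma low_bound:
  assumes fin: "finite S" and pd: "pd S M" and sym: "symm S M" and TS: "T \<subseteq> S"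
    and inv: "is_inv T M A" and i: "i \<in> T"
  shows "A i i \<ge> 2 - M i i"
proof -
  have iS: "i \<in> S" using i TS by auto
  have finT: "finite T" using fin TS finite_subset by auto
  define w where "w = (\<lambda>k. if k = i then 1 else (0::real))"
  define u where "u = (\<lambda>k. if k \<in> T then A k i else 0)"
  have ww: "bil S M w w = M i i" unfolding bil_alt w_def using fin iS
    by (simp add: delta1 delta2)
  have wu: "bil S M w u = 1"
  proof -
    have "bil S M w u = (\<Sum>l\<in>S. M i l * u l)" unfolding bil_alt w_def using fin iS
      by (simp add: delta1 delta2)
    also have "\<dots> = (\<Sum>l\<in>T. M i l * A l i)" unfolding u_def by (rule ext_sum_r[OF fin TS])
    also have "\<dots> = 1" using inv i unfolding is_inv_def by simp
    finally show ?thesis .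
  qed
  have uw: "bil S M u w = 1"
  proof -
    have "bil S M u w = (\<Sum>k\<in>S. u k * M k i)" unfolding bil_alt2 w_def using fin iS
      by (simp add: delta1 delta2)
    also have "\<dots> = (\<Sum>k\<in>T. A k i * M k i)" unfolding u_def by (rule ext_sum_l[OF fin TS])
    also have "\<dots> = (\<Sum>k\<in>T. M i k * A k i)"
      using sym TS iS unfolding symm_def by (intro sum.cong) (auto simp: mult.commute)
    also have "\<dots> = 1" using inv i unfolding is_inv_def by simp
    finally show ?thesis .
  qed
  have uu: "bil S M u u = A i i"
  proof -
    have "bil S M u u = (\<Sum>k\<in>S. u k * (\<Sum>l\<in>S. M k l * u l))" by (rule bil_alt)
    also have "\<dots> = (\<Sum>k\<in>T. A k i * (\<Sum>l\<in>S. M k l * u l))" unfolding u_def by (rule ext_sum_l[OF fin TS])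
    also have "\<dots> = (\<Sum>k\<in>T. A k i * (\<Sum>l\<in>T. M k l * A l i))"
      unfolding u_def using ext_sum_r[OF fin TS] by simp
    also have "\<dots> = (\<Sum>k\<in>T. if k = i then A k i else 0)"
      using inv i unfolding is_inv_def by (intro sum.cong) auto
    also have "\<dots> = A i i" using finT i by simp
    finally show ?thesis .
  qed
  have "0 \<le> bil S M (\<lambda>k. w k - u k) (\<lambda>k. w k - u k)" by (rule pd_psd[OF pd])
  then show ?thesis unfolding bil_diff ww wu uw uu by simp
qed

lemma up_bound:
  assumes fin: "finite S" and pd: "pd S N" and sym: "symm S N" and TS: "T \<subseteq> S"
    and invS: "is_inv S M N" and inv: "is_inv T N B" and j: "j \<in> T"
  shows "B j j \<le> M j j"
proof -
  have jS: "j \<in> S" using j TS by auto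
  have finT: "finite T" using fin TS finite_subset by auto
  define v where "v = (\<lambda>k. M k j)"
  define u where "u = (\<lambda>k. if k \<in> T then B k j else 0)"
  have NM: "(\<Sum>l\<in>S. N k l * M l j) = (if k = j then 1 else 0)" if "k \<in> S" for k
    using invS that jS unfolding is_inv_def by simp
  have MN: "(\<Sum>k\<in>S. M k j * N k l) = (if l = j then 1 else 0)" if l: "l \<in> S" for l
  proof -
    have "(\<Sum>k\<in>S. M k j * N k l) = (\<Sum>k\<in>S. N l k * M k j)"
      using sym l unfolding symm_def by (intro sum.cong) (auto simp: mult.commute)
    then show ?thesis using NM[OF l] by simp
  qed
  have vv: "bil S N v v = M j j"
  proof -
    have "bil S N v v = (\<Sum>k\<in>S. M k j * (if k = j then 1 else 0))"
      unfolding bil_alt v_def using NM by (intro sum.cong) auto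
    also have "\<dots> = M j j" using fin jS by (simp add: delta1)
    finally show ?thesis .
  qed
  have vu: "bil S N v u = B j j"
  proof -
    have "bil S N v u = (\<Sum>l\<in>S. (if l = j then 1 else 0) * u l)"
      unfolding bil_alt2 v_def using MN by (intro sum.cong) auto
    also have "\<dots> = B j j" using fin jS j by (simp add: delta2 u_def)
    finally show ?thesis .
  qed
  have uv: "bil S N u v = B j j"
  proof -
    have "bil S N u v = (\<Sum>k\<in>S. u k * (if k = j then 1 else 0))"
      unfolding bil_alt v_def using NM by (intro sum.cong) auto
    also have "\<dots> = B j j" using fin jS j by (simp add: delta1 u_def)
    finally show ?thesis .
  qed
  have uu: "bil S N u u = B j j"
  proof -
    have "bil S N u u = (\<Sum>k\<in>S. u k * (\<Sum>l\<in>S. N k l * u l))" by (rule bil_alt)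
    also have "\<dots> = (\<Sum>k\<in>T. B k j * (\<Sum>l\<in>S. N k l * u l))" unfolding u_def by (rule ext_sum_l[OF fin TS])
    also have "\<dots> = (\<Sum>k\<in>T. B k j * (\<Sum>l\<in>T. N k l * B l j))"
      unfolding u_def using ext_sum_r[OF fin TS] by simp
    also have "\<dots> = (\<Sum>k\<in>T. if k = j then B k j else 0)"
      using inv j unfolding is_inv_def by (intro sum.cong) auto
    also have "\<dots> = B j j" using finT j by simp
    finally show ?thesis .
  qed
  have "0 \<le> bil S N (\<lambda>k. v k - u k) (\<lambda>k. v k - u k)" by (rule pd_psd[OF pd])
  then show ?thesis unfolding bil_diff vv vu uv uu by simp
qed



lemma cov_eq:
  fixes p a b :: "'x \<Rightarrow> real"
  assumes "(\<Sum>x\<in>C. p x) = 1"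
  shows "(\<Sum>x\<in>C. p x * (a x * b x)) - (\<Sum>x\<in>C. p x * a x) * (\<Sum>x\<in>C. p x * b x) =
    (\<Sum>x\<in>C. p x * (a x - (\<Sum>y\<in>C. p y * a y)) * (b x - (\<Sum>y\<in>C. p y * b y)))"
proof -
  define ma where "ma = (\<Sum>y\<in>C. p y * a y)"
  define mb where "mb = (\<Sum>y\<in>C. p y * b y)"
  have "(\<Sum>x\<in>C. p x * (a x - ma) * (b x - mb)) =
     (\<Sum>x\<in>C. p x * (a x * b x)) - (\<Sum>x\<in>C. p x * a x) * mb - ma * (\<Sum>x\<in>C. p x * b x)
       + ma * mb * (\<Sum>x\<in>C. p x)"
    by (simp add: algebra_simps sum_subtractf sum.distrib sum_distrib_left sum_distrib_right)
  also have "\<dots> = (\<Sum>x\<in>C. p x * (a x * b x)) - ma * mb" using assms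
    unfolding ma_def mb_def by simp
  finally show ?thesis unfolding ma_def mb_def by simp
qed

lemma quad_swap:
  fixes v :: "'k \<Rightarrow> real" and p :: "'x \<Rightarrow> real"
  shows "(\<Sum>I\<in>K. \<Sum>J\<in>K. v I * (\<Sum>x\<in>C. p x * d I x * d J x) * v J) =
    (\<Sum>x\<in>C. p x * (\<Sum>I\<in>K. v I * d I x)^2)"
proof -
  have "(\<Sum>I\<in>K. \<Sum>J\<in>K. v I * (\<Sum>x\<in>C. p x * d I x * d J x) * v J) =
     (\<Sum>I\<in>K. \<Sum>J\<in>K. \<Sum>x\<in>C. p x * (v I * d I x) * (v J * d J x))"
    by (simp add: sum_distrib_left sum_distrib_right mult_ac)
  also have "\<dots> = (\<Sum>I\<in>K. \<Sum>x\<in>C. \<Sum>J\<in>K. p x * (v I * d I x) * (v J * d J x))"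
    by (intro sum.cong refl sum.swap)
  also have "\<dots> = (\<Sum>x\<in>C. \<Sum>I\<in>K. \<Sum>J\<in>K. p x * (v I * d I x) * (v J * d J x))"
    by (rule sum.swap)
  also have "\<dots> = (\<Sum>x\<in>C. p x * (\<Sum>I\<in>K. v I * d I x)^2)"
    by (simp add: power2_eq_square sum_product sum_distrib_left mult_ac)
  finally show ?thesis .
qed

lemma XI_union:
  assumes "finite I" "finite J" "\<forall>i\<in>I \<union> J. x i = 0 \<or> x i = 1"
  shows "XI (I \<union> J) x = XI I x * XI J x"
proof (cases "\<exists>i\<in>I \<union> J. x i = 0")
  case True
  then obtain i where i: "i \<in> I \<union> J" "x i = 0" by blast
  have "XI (I \<union> J) x = 0" unfolding XI_def using assms i by (auto intro: prod_zero)
  moreover have "XI I x * XI J x = 0" unfolding XI_def using assms i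
    by (auto intro: prod_zero)
  ultimately show ?thesis by simp
next
  case False
  then have "\<forall>i\<in>I \<union> J. x i = 1" using assms(3) by blast
  then show ?thesis unfolding XI_def by simp
qed



lemma cube_finite: "finite (cube n)"
  unfolding cube_def by (intro finite_PiE) auto

lemma cube_01: "x \<in> cube n \<Longrightarrow> i \<in> {1..n} \<Longrightarrow> x i = 0 \<or> x i = 1"
  unfolding cube_def by (auto simp: PiE_iff)

lemma idx_finite: "finite (idx n)"
  by (rule finite_subset[of _ "Pow {1..n}"]) (auto simp: idx_def)

lemma idx_D: "I \<in> idx n \<Longrightarrow> I \<subseteq> {1..n} \<and> I \<noteq> {} \<and> finite I"
  unfolding idx_def using finite_subset by auto

lemma G_cov:
  assumes p1: "(\<Sum>x\<in>cube n. p x) = 1" and I: "I \<in> idx n" and J: "J \<in> idx n"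
  shows "G_theta n p I J = (\<Sum>x\<in>cube n. p x * (XI I x - eta n p I) * (XI J x - eta n p J))"
proof -
  have "eta n p (I \<union> J) = (\<Sum>x\<in>cube n. p x * (XI I x * XI J x))"
    unfolding eta_def
  proof (intro sum.cong refl)
    fix x assume x: "x \<in> cube n"
    have "\<forall>i\<in>I \<union> J. x i = 0 \<or> x i = 1" using idx_D[OF I] idx_D[OF J] cube_01[OF x] by blast
    then show "p x * XI (I \<union> J) x = p x * (XI I x * XI J x)"
      using XI_union idx_D[OF I] idx_D[OF J] by metis
  qed
  then show ?thesis unfolding G_theta_def using cov_eq[OF p1, of "XI I" "XI J"]
    unfolding eta_def by simp
qed

lemma bil_G:
  assumes p1: "(\<Sum>x\<in>cube n. p x) = 1"
  shows "bil (idx n) (G_theta n p) v v =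
    (\<Sum>x\<in>cube n. p x * (\<Sum>I\<in>idx n. v I * (XI I x - eta n p I))^2)"
proof -
  have "bil (idx n) (G_theta n p) v v = (\<Sum>I\<in>idx n. \<Sum>J\<in>idx n.
      v I * (\<Sum>x\<in>cube n. p x * (XI I x - eta n p I) * (XI J x - eta n p J)) * v J)"
    unfolding bil_def using G_cov[OF p1] by (intro sum.cong refl) auto
  also have "\<dots> = (\<Sum>x\<in>cube n. p x * (\<Sum>I\<in>idx n. v I * (XI I x - eta n p I))^2)"
    by (rule quad_swap)
  finally show ?thesis .
qed

definition pt :: "nat \<Rightarrow> nat set \<Rightarrow> nat \<Rightarrow> real" where
  "pt n T = (\<lambda>i. if i \<in> {1..n} then (if i \<in> T then 1 else 0) else undefined)"

lemma pt_cube: "pt n T \<in> cube n"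
  unfolding cube_def pt_def by (auto simp: PiE_iff extensional_def)

lemma XI_pt:
  assumes "I \<in> idx n"
  shows "XI I (pt n T) = (if I \<subseteq> T then 1 else 0)"
proof (cases "I \<subseteq> T")
  case True
  then show ?thesis using idx_D[OF assms] unfolding XI_def pt_def
    by (intro trans[OF prod.neutral]) auto
next
  case False
  then obtain i where i: "i \<in> I" "i \<notin> T" by blast
  then show ?thesis using idx_D[OF assms] False unfolding XI_def pt_def
    by (auto intro!: prod_zero bexI[of _ i])
qed

lemma pd_G:
  assumes pos: "\<forall>x\<in>cube n. p x > 0" and p1: "(\<Sum>x\<in>cube n. p x) = 1"
  shows "pd (idx n) (G_theta n p)"
  unfolding pd_def
proof (intro allI impI)
  fix v :: "nat set \<Rightarrow> real" assume v: "\<exists>i\<in>idx n. v i \<noteq> 0"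
  define g where "g = (\<lambda>x. p x * (\<Sum>I\<in>idx n. v I * (XI I x - eta n p I))^2)"
  have g0: "\<forall>x\<in>cube n. g x \<ge> 0" unfolding g_def using pos by (auto intro: less_imp_le)
  have ge: "bil (idx n) (G_theta n p) v v = sum g (cube n)" unfolding bil_G[OF p1] g_def ..
  show "bil (idx n) (G_theta n p) v v > 0"
  proof (rule ccontr)
    assume "\<not> ?thesis"
    moreover have "sum g (cube n) \<ge> 0" using g0 by (intro sum_nonneg) auto
    ultimately have "sum g (cube n) = 0" using ge by simp
    then have gz: "\<forall>x\<in>cube n. g x = 0" using sum_nonneg_eq_0_iff[OF cube_finite] g0 by blast
    define c where "c = (\<Sum>I\<in>idx n. v I * eta n p I)"
    have fc: "(\<Sum>I\<in>idx n. v I * XI I x) = c" if x: "x \<in> cube n" for x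
    proof -
      have "p x * (\<Sum>I\<in>idx n. v I * (XI I x - eta n p I))^2 = 0"
        using gz x unfolding g_def by auto
      moreover have "p x \<noteq> 0" using pos x by (metis less_irrefl)
      ultimately have "(\<Sum>I\<in>idx n. v I * (XI I x - eta n p I)) = 0" by simp
      then show ?thesis unfolding c_def by (simp add: algebra_simps sum_subtractf)
    qed
    have F: "(\<Sum>I\<in>idx n. v I * (if I \<subseteq> T then 1 else 0)) = c" for T
    proof -
      have "(\<Sum>I\<in>idx n. v I * (if I \<subseteq> T then 1 else 0)) = (\<Sum>I\<in>idx n. v I * XI I (pt n T))"
        by (intro sum.cong refl) (simp add: XI_pt)
      then show ?thesis using fc[OF pt_cube] by simp
    qed
    have "(\<Sum>I\<in>idx n. v I * (if I \<subseteq> {} then 1 else 0)) = 0"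
      by (intro sum.neutral ballI) (simp add: idx_def)
    then have "c = 0" using F[of "{}"] by simp
    have vz: "v T = 0" if "T \<in> idx n" for T using that
    proof (induction "card T" arbitrary: T rule: less_induct)
      case less
      have fT: "finite T" using idx_D[OF less.prems] by blast
      have "0 = (\<Sum>I\<in>idx n. v I * (if I \<subseteq> T then 1 else 0))" using F \<open>c = 0\<close> by simp
      also have "\<dots> = (\<Sum>I\<in>idx n. if I = T then v T else 0)"
      proof (intro sum.cong refl)
        fix I assume I: "I \<in> idx n"
        show "v I * (if I \<subseteq> T then 1 else 0) = (if I = T then v T else 0)"
        proof (cases "I \<subseteq> T \<and> I \<noteq> T")
          case True
          then have "card I < card T" using fT by (intro psubset_card_mono) auto
          then have "v I = 0" using less.hyps I by blast
          then show ?thesis using True by simp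
        next
          case False
          then show ?thesis by auto
        qed
      qed
      also have "\<dots> = v T" using less.prems idx_finite by simp
      finally show ?case by simp
    qed
    with v show False by blast
  qed
qed

lemma G_symm: "symm (idx n) (G_theta n p)"
  unfolding symm_def G_theta_def by (auto simp: Un_commute)

lemma G_diag: "G_theta n p I I \<le> 1"
proof -
  have "(eta n p I - 1/2)^2 \<ge> 0" by simp
  then show ?thesis unfolding G_theta_def by (simp add: power2_eq_square algebra_simps)
qed

lemma mat_inv_on_eq: "mat_inv_on S M = (SOME N. is_inv S M N)"
  unfolding mat_inv_on_def is_inv_def ..

lemma inv_some: assumes "\<exists>N. is_inv S M N" shows "is_inv S M (mat_inv_on S M)"
  using assms unfolding mat_inv_on_eq by (rule someI_ex)

lemma is_inv_swap: "is_inv S M N \<Longrightarrow> is_inv S N M"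
  unfolding is_inv_def by blast

lemma is_inv_cong:
  assumes "\<forall>i\<in>S. \<forall>j\<in>S. M i j = M2 i j"
  shows "is_inv S M X = is_inv S M2 X"
proof -
  have "(\<Sum>k\<in>S. M i k * X k j) = (\<Sum>k\<in>S. M2 i k * X k j)"
       "(\<Sum>k\<in>S. X i k * M k j) = (\<Sum>k\<in>S. X i k * M2 k j)" if "i \<in> S" "j \<in> S" for i j
    using assms that by (auto intro!: sum.cong)
  then show ?thesis unfolding is_inv_def by auto
qed

lemma mat_inv_on_cong:
  assumes "\<forall>i\<in>S. \<forall>j\<in>S. M i j = M2 i j"
  shows "mat_inv_on S M = mat_inv_on S M2"
proof -
  have "is_inv S M = is_inv S M2" by (rule ext) (rule is_inv_cong[OF assms])
  then show ?thesis unfolding mat_inv_on_eq by simp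
qed

theorem lemma1:
  fixes n l :: nat and p :: "(nat \<Rightarrow> real) \<Rightarrow> real"
  assumes "n \<ge> 2" and "1 \<le> l" and "l \<le> n - 1"
    and "\<forall>x\<in>cube n. p x > 0"
    and "(\<Sum>x\<in>cube n. p x) = 1"
  shows "(\<forall>I\<in>I_eta n l. blockA n l p I I \<ge> 1) \<and>
         (\<forall>J\<in>J_theta n l. blockB n l p J J \<le> 1)"
proof -
  let ?S = "idx n" and ?G = "G_theta n p"
  have fin: "finite ?S" by (rule idx_finite)
  have pdG: "pd ?S ?G" using pd_G assms(4,5) by blast
  have symG: "symm ?S ?G" by (rule G_symm)
  define N where "N = mat_inv_on ?S ?G"
  have invN: "is_inv ?S ?G N" unfolding N_def by (rule inv_some[OF pd_ex_inv[OF fin pdG]])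
  have symN: "symm ?S N" using inv_sym[OF fin symG invN] .
  have pdN: "pd ?S N" using pd_inv[OF fin pdG invN] .
  have GN: "G_eta n p = N" unfolding G_eta_def N_def ..
  define M' where "M' = mat_inv_on ?S N"
  have invM': "is_inv ?S N M'" unfolding M'_def by (rule inv_some) (use is_inv_swap[OF invN] in blast)
  have M'G: "\<forall>i\<in>?S. \<forall>j\<in>?S. M' i j = ?G i j"
    using inv_unique[OF fin invM' is_inv_swap[OF invN]] by blast
  have TS: "I_eta n l \<subseteq> ?S" unfolding I_eta_def by auto
  have JS: "J_theta n l \<subseteq> ?S" unfolding J_theta_def by auto
  have A_eq: "blockA n l p = mat_inv_on (I_eta n l) ?G"
    unfolding blockA_def GN M'_def[symmetric] using M'G TS
    by (intro mat_inv_on_cong) blast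
  have invA: "is_inv (I_eta n l) ?G (blockA n l p)"
    unfolding A_eq by (rule inv_some[OF pd_ex_inv]) (use fin TS finite_subset pd_sub[OF fin pdG TS] in auto)
  have invB: "is_inv (J_theta n l) N (blockB n l p)"
    unfolding blockB_def N_def[symmetric]
    by (rule inv_some[OF pd_ex_inv]) (use fin JS finite_subset pd_sub[OF fin pdN JS] in auto)
  show ?thesis
  proof (intro conjI ballI)
    fix I assume I: "I \<in> I_eta n l"
    have "blockA n l p I I \<ge> 2 - ?G I I" by (rule low_bound[OF fin pdG symG TS invA I])
    then show "blockA n l p I I \<ge> 1" using G_diag[of n p I] by simp
  next
    fix J assume J: "J \<in> J_theta n l"
    have "blockB n l p J J \<le> ?G J J" by (rule up_bound[OF fin pdN symN JS invN invB J])
    then show "blockB n l p J J \<le> 1" using G_diag[of n p J] by simp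
  qed
qed


end
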